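(* Let $x\in X(l_1,\dots,l_n,l_\infty)$ and let $S\subseteq\{1,\dots,n\}$ be a set of indices with $l_i$ equal for all $i\in S$. For every permutation $\sigma$ of $S$, the diagram obtained from $x$ by moving each label $z_i$, $i\in S$, to the position originally occupied by $z_{\sigma(i)}$ (keeping all other labels and the unlabelled arc configuration unchanged) lies in the same $J_n$-orbit as $x$.
   Context: Cactus group: $J_n$ is the group generated by $s_{p,q}$, $1\le p<q\le n$, subject to the relations $s_{p,q}^2=e$; $s_{p,q}s_{p',q'}=s_{p',q'}s_{p,q}$ if $[p,q]$ and $[p',q']$ are disjoint; $s_{p,q}s_{p',q'}s_{p,q}=s_{p+q-q',p+q-p'}$ if $p\le p'<q'\le q$. Arc diagrams: fix nonnegative integers $l_1,\dots,l_n,l_\infty$. On the boundary circle of a closed disc place $n+1$ marked positions: position $0$ (occupied by $z_\infty$) and positions $1,\dots,n$ following it clockwise. An arc diagram is a bijective assignment of labels $z_1,\dots,z_n$ to positions $1,\dots,n$ together with a finite collection of simple arcs in the disc, pairwise disjoint except at endpoints, each joining two distinct marked points, such that $z_j$ is an endpoint of exactly $l_j$ arcs ($j\in\{1,\dots,n,\infty\}$; $l_j$ is the valence). Parallel arcs are allowed; diagrams are up to isotopy, equivalently determined by the labelling and the number of arcs between each pair of marked points. $X(l_1,\dots,l_n,l_\infty)$ is the set of such diagrams. Action: $s_{p,q}$ ($1\le p<q\le n$) acts by cutting off positions $p,\dots,q$ with a chord $\ell$ (arcs isotoped to cross $\ell$ at most once), reflecting that region by the reflection reversing $\ell$ (label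 at position $p+t$ goes to position $q-t$, crossing points on $\ell$ reversed), leaving the rest unchanged and reconnecting arcs at $\ell$. Words act right to left; this is an action of $J_n$. *)

theory Defs
  imports "HOL-Combinatorics.Permutations"
begin

text \<open>
Marked positions on the boundary circle are 0,1,...,n in clockwise
order; position 0 carries z_infinity.  A diagram is a pair (lab, m) where
  lab pos = j  means that label z_j sits at position pos (1 <= pos <= n),
  m a b      is the number of arcs joining positions a and b.
Canonical conventions: lab pos = 0 for pos outside {1..n}; m a b = 0 unless a,b <= n.
\<close>

type_synonym diagram = "(nat \<Rightarrow> nat) \<times> (nat \<Rightarrow> nat \<Rightarrow> nat)"

definition arc_diagrams :: "nat \<Rightarrow> (nat \<Rightarrow> nat) \<Rightarrow> nat \<Rightarrow> diagram set" where
  "arc_diagrams n l linf = {(lab, m).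
      bij_betw lab {1..n} {1..n}
    \<and> (\<forall>pos. pos \<notin> {1..n} \<longrightarrow> lab pos = 0)
    \<and> (\<forall>a b. m a b = m b a)
    \<and> (\<forall>a. m a a = 0)
    \<and> (\<forall>a b. (a > n \<or> b > n) \<longrightarrow> m a b = 0)
    \<and> (\<forall>a b c d. a < c \<and> c < b \<and> b < d \<and> d \<le> n \<longrightarrow> m a b = 0 \<or> m c d = 0)
    \<and> (\<forall>pos\<in>{1..n}. (\<Sum>b\<le>n. m pos b) = l (lab pos))
    \<and> (\<Sum>b\<le>n. m 0 b) = linf}"

text \<open>Arcs crossing the chord are listed
with multiplicity: inner endpoints ascending (A), outer endpoints in the order in
which the boundary is traversed counterclockwise from p (O): p-1,...,1,0,n,...,q+1.
Non-crossing arcs pair these lists index-wise; after reflection the inner ends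
become the reversed, reflected list.\<close>

definition refl_pos :: "nat \<Rightarrow> nat \<Rightarrow> nat \<Rightarrow> nat" where
  "refl_pos p q a = p + q - a"

definition inner_list :: "nat \<Rightarrow> nat \<Rightarrow> nat \<Rightarrow> (nat \<Rightarrow> nat \<Rightarrow> nat) \<Rightarrow> nat list" where
  "inner_list n p q m =
     concat (map (\<lambda>a. replicate (\<Sum>u\<in>{..n} - {p..q}. m u a) a) [p..<Suc q])"

definition outer_order :: "nat \<Rightarrow> nat \<Rightarrow> nat \<Rightarrow> nat list" where
  "outer_order n p q = rev [0..<p] @ rev [Suc q..<Suc n]"

definition outer_list :: "nat \<Rightarrow> nat \<Rightarrow> nat \<Rightarrow> (nat \<Rightarrow> nat \<Rightarrow> nat) \<Rightarrow> nat list" where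
  "outer_list n p q m =
     concat (map (\<lambda>u. replicate (\<Sum>a\<in>{p..q}. m u a) u) (outer_order n p q))"

definition new_crossing :: "nat \<Rightarrow> nat \<Rightarrow> nat \<Rightarrow> (nat \<Rightarrow> nat \<Rightarrow> nat) \<Rightarrow> (nat \<times> nat) list" where
  "new_crossing n p q m =
     zip (outer_list n p q m) (map (refl_pos p q) (rev (inner_list n p q m)))"

definition act :: "nat \<Rightarrow> nat \<Rightarrow> nat \<Rightarrow> diagram \<Rightarrow> diagram" where
  "act n p q x = (case x of (lab, m) \<Rightarrow>
     ((\<lambda>pos. if p \<le> pos \<and> pos \<le> q then lab (refl_pos p q pos) else lab pos),
      (\<lambda>i j. if p \<le> i \<and> i \<le> q \<and> p \<le> j \<and> j \<le> q then m (refl_pos p q i) (refl_pos p q j)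
             else if \<not> (p \<le> i \<and> i \<le> q) \<and> \<not> (p \<le> j \<and> j \<le> q) then m i j
             else if p \<le> i \<and> i \<le> q then count_list (new_crossing n p q m) (j, i)
             else count_list (new_crossing n p q m) (i, j))))"

text \<open>One generator step; the J_n-orbit is the reflexive-transitive closure, since
J_n is generated by the involutions s_{p,q}.\<close>

definition cactus_step :: "nat \<Rightarrow> diagram \<Rightarrow> diagram \<Rightarrow> bool" where
  "cactus_step n x y \<longleftrightarrow> (\<exists>p q. 1 \<le> p \<and> p < q \<and> q \<le> n \<and> y = act n p q x)"

definition same_orbit :: "nat \<Rightarrow> diagram \<Rightarrow> diagram \<Rightarrow> bool" where
  "same_orbit n x y \<longleftrightarrow> (cactus_step n)\<^sup>*\<^sup>* x y"

definition relabel :: "(nat \<Rightarrow> nat) \<Rightarrow> diagram \<Rightarrow> diagram" where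
  "relabel \<sigma> x = (case x of (lab, m) \<Rightarrow> ((\<lambda>pos. inv \<sigma> (lab pos)), m))"

end

theory Submission
  imports Defs
begin


definition blocks :: "('a \<Rightarrow> nat) \<Rightarrow> 'a list \<Rightarrow> 'a list" where
  "blocks f xs = concat (map (\<lambda>x. replicate (f x) x) xs)"

lemma blocks_Nil[simp]: "blocks f [] = []" by (simp add: blocks_def)
lemma blocks_Cons[simp]: "blocks f (x#xs) = replicate (f x) x @ blocks f xs"
  by (simp add: blocks_def)

lemma blocks_cong: "(\<And>x. x \<in> set xs \<Longrightarrow> f x = g x) \<Longrightarrow> blocks f xs = blocks g xs"
  by (induction xs) auto

lemma length_blocks: "length (blocks f xs) = sum_list (map f xs)"
  by (induction xs) auto

lemma set_blocks: "x \<in> set (blocks f xs) \<longleftrightarrow> x \<in> set xs \<and> f x > 0"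
  by (induction xs) (auto simp: set_replicate_conv_if)

lemma count_replicate[simp]: "count_list (replicate k x) y = (if x = y then k else 0)"
  by (induction k) auto

lemma sum_list_pos: "0 < sum_list (map f xs) \<Longrightarrow> \<exists>x\<in>set xs. 0 < (f x::nat)"
  by (induction xs) auto

lemma count_blocks: "distinct xs \<Longrightarrow> count_list (blocks f xs) u = (if u \<in> set xs then f u else 0)"
  by (induction xs) (auto simp: count_list_0_iff)

lemma sorted_map_blocks: "sorted (map g xs) \<Longrightarrow> sorted (map g (blocks f xs))"
  by (induction xs) (auto simp: sorted_append set_blocks)

lemma row_take_drop:
  assumes "\<forall>b\<in>set ys. r b \<le> c b"
    and "\<forall>k l. k < l \<and> l < length ys \<and> r (ys!k) < c (ys!k) \<longrightarrow> r (ys!l) = 0"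
  shows "take (sum_list (map r ys)) (blocks c ys) = blocks r ys \<and>
         drop (sum_list (map r ys)) (blocks c ys) = blocks (\<lambda>b. c b - r b) ys"
  using assms
proof (induction ys)
  case Nil then show ?case by simp
next
  case (Cons b ys)
  have h2: "\<forall>k l. k < l \<and> l < length ys \<and> r (ys!k) < c (ys!k) \<longrightarrow> r (ys!l) = 0"
  proof (intro allI impI)
    fix k l assume "k < l \<and> l < length ys \<and> r (ys!k) < c (ys!k)"
    then show "r (ys!l) = 0" using Cons.prems(2)[rule_format, of "Suc k" "Suc l"] by simp
  qed
  have IH: "take (sum_list (map r ys)) (blocks c ys) = blocks r ys \<and>
         drop (sum_list (map r ys)) (blocks c ys) = blocks (\<lambda>b. c b - r b) ys"
    using Cons.IH Cons.prems(1) h2 by simp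
  show ?case
  proof (cases "r b < c b")
    case True
    have z: "\<forall>b'\<in>set ys. r b' = 0"
    proof
      fix b' assume "b' \<in> set ys"
      then obtain l where "l < length ys" "ys!l = b'" by (auto simp: in_set_conv_nth)
      then show "r b' = 0" using Cons.prems(2)[rule_format, of 0 "Suc l"] True by simp
    qed
    then have s0: "sum_list (map r ys) = 0" by (simp add: sum_list_eq_0_iff)
    have b0: "blocks r ys = []" using z by (induction ys) auto
    have bc: "blocks (\<lambda>b. c b - r b) ys = blocks c ys" using z by (intro blocks_cong) auto
    have le: "r b \<le> c b" using True by simp
    have t1: "take (r b) (replicate (c b) b @ blocks c ys) = replicate (r b) b"
      using le by (simp add: take_append)
    have t2: "drop (r b) (replicate (c b) b @ blocks c ys) = replicate (c b - r b) b @ blocks c ys"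
      using le by (simp add: drop_append)
    show ?thesis unfolding sum_list.Cons list.map(2) s0 add_0_right blocks_Cons b0 bc t1 t2
      by simp
  next
    case False
    then have "r b = c b" using Cons.prems(1) by (simp add: le_neq_implies_less)
    then show ?thesis using IH by (simp add: take_append drop_append)
  qed
qed

lemma count_zip_replicate:
  "count_list (zip (replicate k u) L) (v,b) = (if v = u then count_list (take k L) b else 0)"
proof (induction k arbitrary: L)
  case 0 then show ?case by simp
next
  case (Suc k) then show ?case by (cases L) auto
qed

lemma zip_count:
  assumes "distinct xs" "distinct ys"
    and "\<forall>i j k l. i < j \<and> j < length xs \<and> k < l \<and> l < length ys \<longrightarrow>
           M (xs!i) (ys!l) = 0 \<or> M (xs!j) (ys!k) = 0"
  shows "\<forall>u\<in>set xs. \<forall>b\<in>set ys.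
    count_list (zip (blocks (\<lambda>u. sum_list (map (M u) ys)) xs)
                    (blocks (\<lambda>b. sum_list (map (\<lambda>u. M u b) xs)) ys)) (u,b) = M u b"
  using assms
proof (induction xs)
  case Nil then show ?case by simp
next
  case (Cons u xs)
  define R where "R = (\<lambda>u. sum_list (map (M u) ys))"
  define C where "C = (\<lambda>b. sum_list (map (\<lambda>u. M u b) (u#xs)))"
  define C' where "C' = (\<lambda>b. sum_list (map (\<lambda>u. M u b) xs))"
  have CC: "C b = M u b + C' b" for b by (simp add: C_def C'_def)
  have nc': "\<forall>i j k l. i < j \<and> j < length xs \<and> k < l \<and> l < length ys \<longrightarrow>
           M (xs!i) (ys!l) = 0 \<or> M (xs!j) (ys!k) = 0"
  proof (intro allI impI)
    fix i j k l assume "i < j \<and> j < length xs \<and> k < l \<and> l < length ys"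
    then show "M (xs!i) (ys!l) = 0 \<or> M (xs!j) (ys!k) = 0"
      using Cons.prems(3)[rule_format, of "Suc i" "Suc j" k l] by simp
  qed
  have IH: "\<forall>u\<in>set xs. \<forall>b\<in>set ys. count_list (zip (blocks R xs) (blocks C' ys)) (u,b) = M u b"
    using Cons.IH Cons.prems nc' unfolding R_def C'_def by simp
  have rd: "take (R u) (blocks C ys) = blocks (M u) ys \<and>
         drop (R u) (blocks C ys) = blocks (\<lambda>b. C b - M u b) ys"
    unfolding R_def
  proof (rule row_take_drop)
    show "\<forall>b\<in>set ys. M u b \<le> C b" using CC by simp
    show "\<forall>k l. k < l \<and> l < length ys \<and> M u (ys!k) < C (ys!k) \<longrightarrow> M u (ys!l) = 0"
    proof (intro allI impI)
      fix k l assume a: "k < l \<and> l < length ys \<and> M u (ys!k) < C (ys!k)"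
      then have "C' (ys!k) > 0" using CC[of "ys!k"] by simp
      then obtain u' where u': "u' \<in> set xs" "M u' (ys!k) > 0"
        unfolding C'_def using sum_list_pos[of "\<lambda>u. M u (ys!k)" xs] by blast
      then obtain j where j: "j < length xs" "xs!j = u'" by (auto simp: in_set_conv_nth)
      show "M u (ys!l) = 0"
        using Cons.prems(3)[rule_format, of 0 "Suc j" k l] a j u' by auto
    qed
  qed
  have bd: "blocks (\<lambda>b. C b - M u b) ys = blocks C' ys" using CC by (intro blocks_cong) simp
  have lenr: "length (blocks (M u) ys) = R u" by (simp add: length_blocks R_def)
  have eqz: "zip (blocks R (u#xs)) (blocks C ys) =
     zip (replicate (R u) u) (blocks (M u) ys) @ zip (blocks R xs) (blocks C' ys)"
    apply (simp only: blocks_Cons zip_append1 length_replicate)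
    using rd bd by (simp add: C_def)
  have uxs: "u \<notin> set xs" using Cons.prems(1) by simp
  show ?case
  proof (intro ballI)
    fix v b assume v: "v \<in> set (u#xs)" and b: "b \<in> set ys"
    have key: "count_list (zip (blocks R (u#xs)) (blocks C ys)) (v,b) = M v b"
      unfolding eqz
    proof (cases "v = u")
      case True
      have "(u,b) \<notin> set (zip (blocks R xs) (blocks C' ys))"
        using uxs by (auto dest: set_zip_leftD simp: set_blocks)
      then show "count_list (zip (replicate (R u) u) (blocks (M u) ys) @ zip (blocks R xs) (blocks C' ys)) (v, b) = M v b"
        using True lenr b Cons.prems(2)
        by (simp add: count_zip_replicate count_blocks count_list_0_iff)
    next
      case False
      then have "v \<in> set xs" using v by simp
      then show "count_list (zip (replicate (R u) u) (blocks (M u) ys) @ zip (blocks R xs) (blocks C' ys)) (v, b) = M v b"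
        using False IH b by (simp add: count_zip_replicate)
    qed
    from key show "count_list (zip (blocks (\<lambda>u. sum_list (map (M u) ys)) (u # xs))
        (blocks (\<lambda>b. sum_list (map (\<lambda>u. M u b) (u # xs))) ys)) (v, b) = M v b"
      by (simp only: R_def C_def)
  qed
qed



abbreviation rp where "rp p q \<equiv> refl_pos p q"

lemma rp_in: "p \<le> a \<Longrightarrow> a \<le> q \<Longrightarrow> p \<le> refl_pos p q a \<and> refl_pos p q a \<le> q"
  unfolding refl_pos_def by linarith
lemma rp_rp[simp]: "p \<le> a \<Longrightarrow> a \<le> q \<Longrightarrow> refl_pos p q (refl_pos p q a) = a"
  by (simp add: refl_pos_def)

definition before :: "nat \<Rightarrow> nat \<Rightarrow> nat \<Rightarrow> nat \<Rightarrow> nat \<Rightarrow> bool" where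
  "before n p q u u' \<longleftrightarrow> (u < p \<and> u' < u) \<or> (u < p \<and> q < u' \<and> u' \<le> n) \<or> (q < u' \<and> u' < u \<and> u \<le> n)"

definition NCrel :: "nat \<Rightarrow> nat \<Rightarrow> nat \<Rightarrow> (nat \<Rightarrow> nat \<Rightarrow> nat) \<Rightarrow> bool" where
  "NCrel n p q m \<longleftrightarrow> (\<forall>u u' a a'. before n p q u u' \<and> p \<le> a \<and> a < a' \<and> a' \<le> q \<longrightarrow> m u a' = 0 \<or> m u' a = 0)"

lemma set_outer_order:
  assumes "1 \<le> p" "p \<le> q" "q \<le> n"
  shows "set (outer_order n p q) = {..n} - {p..q}"
  using assms by (auto simp: outer_order_def)

lemma mem_outer_order:
  assumes "1 \<le> p" "p \<le> q" "q \<le> n"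
  shows "u \<in> set (outer_order n p q) \<longleftrightarrow> u \<le> n \<and> (u < p \<or> q < u)"
  using assms by (auto simp: outer_order_def)

lemma distinct_outer_order: "p \<le> q \<Longrightarrow> distinct (outer_order n p q)"
  by (auto simp: outer_order_def)

lemma length_outer_order: "q \<le> n \<Longrightarrow> length (outer_order n p q) = p + (n - q)"
  unfolding outer_order_def length_append length_rev length_upt by simp

lemma nth_outer_order:
  assumes "q \<le> n" "i < p + (n - q)"
  shows "outer_order n p q ! i = (if i < p then p - 1 - i else n - (i - p))"
  using assms by (auto simp: outer_order_def nth_append rev_nth simp del: upt_Suc)

lemma before_nth:
  assumes "1 \<le> p" "p \<le> q" "q \<le> n" "i < j" "j < length (outer_order n p q)"
  shows "before n p q (outer_order n p q ! i) (outer_order n p q ! j)"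
  using assms by (auto simp: length_outer_order nth_outer_order before_def)

definition gkey :: "nat \<Rightarrow> nat \<Rightarrow> nat \<Rightarrow> nat" where
  "gkey n p v = (if v < p then p - 1 - v else p + n - v)"

lemma before_gkey: "before n p q u u' \<Longrightarrow> p \<le> q \<Longrightarrow> gkey n p u < gkey n p u'"
  by (auto simp: before_def gkey_def)

lemma sorted_gkey_outer_order:
  assumes "1 \<le> p" "p \<le> q" "q \<le> n"
  shows "sorted (map (gkey n p) (outer_order n p q))"
  unfolding sorted_iff_nth_mono_less
proof (intro allI impI)
  fix i j assume "i < j" "j < length (map (gkey n p) (outer_order n p q))"
  then show "map (gkey n p) (outer_order n p q) ! i \<le> map (gkey n p) (outer_order n p q) ! j"
    using before_nth[OF assms, of i j] before_gkey[of n p q] assms by (auto intro: less_imp_le)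
qed

lemma outer_list_blocks:
  "outer_list n p q m = blocks (\<lambda>u. \<Sum>a\<in>{p..q}. m u a) (outer_order n p q)"
  by (simp add: outer_list_def blocks_def)

lemma inner_list_blocks:
  "inner_list n p q m = blocks (\<lambda>a. \<Sum>u\<in>{..n} - {p..q}. m u a) [p..<Suc q]"
  by (simp add: inner_list_def blocks_def)

lemma key_count:
  assumes nc: "NCrel n p q m" and pq: "1 \<le> p" "p \<le> q" "q \<le> n"
    and u: "u \<in> set (outer_order n p q)" and a: "p \<le> a" "a \<le> q"
  shows "count_list (zip (outer_list n p q m) (inner_list n p q m)) (u,a) = m u a"
proof -
  let ?O = "outer_order n p q" and ?I = "[p..<Suc q]"
  have dO: "distinct ?O" using pq by (simp add: distinct_outer_order)
  have e1: "(\<lambda>v. \<Sum>a\<in>{p..q}. m v a) = (\<lambda>v. sum_list (map (m v) ?I))"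
  proof
    fix v
    have "sum_list (map (m v) ?I) = sum (m v) (set ?I)" by (rule sum_list_distinct_conv_sum_set) simp
    also have "set ?I = {p..q}" by auto
    finally show "(\<Sum>a\<in>{p..q}. m v a) = sum_list (map (m v) ?I)" by simp
  qed
  have e2: "(\<lambda>b. \<Sum>v\<in>{..n} - {p..q}. m v b) = (\<lambda>b. sum_list (map (\<lambda>v. m v b) ?O))"
  proof
    fix b
    have "sum_list (map (\<lambda>v. m v b) ?O) = sum (\<lambda>v. m v b) (set ?O)" by (rule sum_list_distinct_conv_sum_set) (rule dO)
    then show "(\<Sum>v\<in>{..n} - {p..q}. m v b) = sum_list (map (\<lambda>v. m v b) ?O)"
      using set_outer_order[OF pq] by simp
  qed
  have h1: "outer_list n p q m = blocks (\<lambda>u. sum_list (map (m u) ?I)) ?O"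
    unfolding outer_list_blocks e1 ..
  have h2: "inner_list n p q m = blocks (\<lambda>b. sum_list (map (\<lambda>u. m u b) ?O)) ?I"
    unfolding inner_list_blocks e2 ..
  have ncidx: "\<forall>i j k l. i < j \<and> j < length ?O \<and> k < l \<and> l < length ?I \<longrightarrow>
           m (?O!i) (?I!l) = 0 \<or> m (?O!j) (?I!k) = 0"
  proof (intro allI impI)
    fix i j k l assume h: "i < j \<and> j < length ?O \<and> k < l \<and> l < length ?I"
    have "before n p q (?O!i) (?O!j)" using before_nth[OF pq] h by blast
    moreover have "?I!k = p + k" "?I!l = p + l" using h by (auto simp del: upt_Suc intro!: nth_upt)
    moreover have "p + l \<le> q" using h by (simp del: upt_Suc) linarith
    ultimately show "m (?O!i) (?I!l) = 0 \<or> m (?O!j) (?I!k) = 0"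
      using nc h unfolding NCrel_def by (metis add_less_cancel_left le_add1)
  qed
  have aI: "a \<in> set ?I" using a by (simp del: upt_Suc)
  have dI: "distinct ?I" by (rule distinct_upt)
  show ?thesis unfolding h1 h2 using zip_count[OF dO dI ncidx] u aI by blast
qed



definition actm :: "nat \<Rightarrow> nat \<Rightarrow> nat \<Rightarrow> (nat \<Rightarrow> nat \<Rightarrow> nat) \<Rightarrow> (nat \<Rightarrow> nat \<Rightarrow> nat)" where
  "actm n p q m = (\<lambda>i j. if p \<le> i \<and> i \<le> q \<and> p \<le> j \<and> j \<le> q then m (refl_pos p q i) (refl_pos p q j)
             else if \<not> (p \<le> i \<and> i \<le> q) \<and> \<not> (p \<le> j \<and> j \<le> q) then m i j
             else if p \<le> i \<and> i \<le> q then count_list (new_crossing n p q m) (j, i)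
             else count_list (new_crossing n p q m) (i, j))"

lemma act_split: "act n p q (lab, m) =
   ((\<lambda>pos. if p \<le> pos \<and> pos \<le> q then lab (refl_pos p q pos) else lab pos), actm n p q m)"
  by (simp add: act_def actm_def)

definition goodm :: "nat \<Rightarrow> (nat \<Rightarrow> nat \<Rightarrow> nat) \<Rightarrow> bool" where
  "goodm n m \<longleftrightarrow> (\<forall>a b. m a b = m b a) \<and> (\<forall>a. m a a = 0) \<and> (\<forall>a b. (a > n \<or> b > n) \<longrightarrow> m a b = 0)
    \<and> (\<forall>a b c d. a < c \<and> c < b \<and> b < d \<and> d \<le> n \<longrightarrow> m a b = 0 \<or> m c d = 0)"

lemma arc_goodm: "(lab, m) \<in> arc_diagrams n l linf \<Longrightarrow> goodm n m"
  by (simp add: arc_diagrams_def goodm_def)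

lemma goodm_NCrel:
  assumes g: "goodm n m" and pq: "1 \<le> p" "p \<le> q" "q \<le> n"
  shows "NCrel n p q m"
  unfolding NCrel_def
proof (intro allI impI)
  fix u u' a a' assume h: "before n p q u u' \<and> p \<le> a \<and> a < a' \<and> a' \<le> q"
  have sym: "m x y = m y x" for x y using g unfolding goodm_def by (elim conjE) (rule spec2)
  have nc0: "\<forall>a b c d. a < c \<and> c < b \<and> b < d \<and> d \<le> n \<longrightarrow> m a b = 0 \<or> m c d = 0"
    using g unfolding goodm_def by (elim conjE)
  have hb: "before n p q u u'" using h by simp
  have nc: "a < c \<Longrightarrow> c < b \<Longrightarrow> b < d \<Longrightarrow> d \<le> n \<Longrightarrow> m a b = 0 \<or> m c d = 0" for a b c d
    using nc0 by simp
  consider (A) "u < p" "u' < u" | (B) "u < p" "q < u'" "u' \<le> n" | (C) "q < u'" "u' < u" "u \<le> n"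
    using hb unfolding before_def by blast
  then show "m u a' = 0 \<or> m u' a = 0"
  proof cases
    case A
    have "m u' a = 0 \<or> m u a' = 0" using A h pq by (intro nc) auto
    then show ?thesis by (elim disjE) simp_all
  next
    case B
    have "m u a' = 0 \<or> m a u' = 0" using B h pq by (intro nc) auto
    then show ?thesis using sym[of a u'] by auto
  next
    case C
    have "m a u' = 0 \<or> m a' u = 0" using C h pq by (intro nc) auto
    then show ?thesis using sym[of a u'] sym[of a' u] by auto
  qed
qed

lemma map_rev_blocks: "map g (rev (blocks f xs)) = concat (map (\<lambda>x. replicate (f x) (g x)) (rev xs))"
  by (induction xs) auto

lemma rev_upt_refl: "p \<le> q \<Longrightarrow> rev [p..<Suc q] = map (refl_pos p q) [p..<Suc q]"
  by (rule nth_equalityI) (auto simp: rev_nth refl_pos_def simp del: upt_Suc)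

lemma rev_blocks_refl:
  assumes "p \<le> q"
  shows "map (refl_pos p q) (rev (blocks f [p..<Suc q])) = blocks (\<lambda>a. f (refl_pos p q a)) [p..<Suc q]"
proof -
  have "map (refl_pos p q) (rev (blocks f [p..<Suc q])) =
     concat (map (\<lambda>x. replicate (f x) (refl_pos p q x)) (map (refl_pos p q) [p..<Suc q]))"
    unfolding map_rev_blocks rev_upt_refl[OF assms] ..
  also have "\<dots> = concat (map (\<lambda>a. replicate (f (refl_pos p q a)) a) [p..<Suc q])"
  proof -
    have "map (\<lambda>x. replicate (f (refl_pos p q x)) (refl_pos p q (refl_pos p q x))) [p..<Suc q]
        = map (\<lambda>a. replicate (f (refl_pos p q a)) a) [p..<Suc q]"
      by (rule map_cong) (auto simp del: upt_Suc)
    then show ?thesis by (simp only: map_map comp_def)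
  qed
  finally show ?thesis by (simp add: blocks_def del: upt_Suc)
qed

definition Cin :: "nat \<Rightarrow> nat \<Rightarrow> nat \<Rightarrow> (nat \<Rightarrow> nat \<Rightarrow> nat) \<Rightarrow> nat \<Rightarrow> nat" where
  "Cin n p q m a = (\<Sum>u\<in>{..n} - {p..q}. m u a)"
definition Rout :: "nat \<Rightarrow> nat \<Rightarrow> (nat \<Rightarrow> nat \<Rightarrow> nat) \<Rightarrow> nat \<Rightarrow> nat" where
  "Rout p q m u = (\<Sum>a\<in>{p..q}. m u a)"

lemma inner_list_eq: "inner_list n p q m = blocks (Cin n p q m) [p..<Suc q]"
  by (simp add: inner_list_blocks Cin_def[abs_def])
lemma outer_list_eq: "outer_list n p q m = blocks (Rout p q m) (outer_order n p q)"
  by (simp add: outer_list_blocks Rout_def[abs_def])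

lemma new_crossing_eq:
  "p \<le> q \<Longrightarrow> new_crossing n p q m =
    zip (blocks (Rout p q m) (outer_order n p q)) (blocks (\<lambda>a. Cin n p q m (refl_pos p q a)) [p..<Suc q])"
  unfolding new_crossing_def inner_list_eq outer_list_eq rev_blocks_refl ..

lemma length_lists:
  assumes pq: "1 \<le> p" "p \<le> q" "q \<le> n"
  shows "length (blocks (Rout p q m) (outer_order n p q)) = length (blocks (Cin n p q m) [p..<Suc q])"
proof -
  have "length (blocks (Rout p q m) (outer_order n p q)) = sum (Rout p q m) ({..n} - {p..q})"
    unfolding length_blocks
    by (simp add: sum_list_distinct_conv_sum_set distinct_outer_order pq set_outer_order[OF pq])
  also have "\<dots> = sum (Cin n p q m) {p..q}" unfolding Rout_def Cin_def by (rule sum.swap)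
  also have "\<dots> = length (blocks (Cin n p q m) [p..<Suc q])"
    unfolding length_blocks by (simp add: sum_list_distinct_conv_sum_set atLeastLessThanSuc_atLeastAtMost del: upt_Suc)
  finally show ?thesis .
qed

lemma length_lists2:
  assumes pq: "1 \<le> p" "p \<le> q" "q \<le> n"
  shows "length (blocks (Rout p q m) (outer_order n p q)) = length (blocks (\<lambda>a. Cin n p q m (refl_pos p q a)) [p..<Suc q])"
  using length_lists[OF pq, of m] rev_blocks_refl[of p q "Cin n p q m"] pq
  by (metis length_map length_rev)

lemma sum_count_zip2:
  "length xs = length ys \<Longrightarrow> set ys \<subseteq> B \<Longrightarrow> finite B \<Longrightarrow>
    (\<Sum>b\<in>B. count_list (zip xs ys) (u,b)) = count_list xs u"
proof (induction xs ys rule: list_induct2)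
  case Nil then show ?case by simp
next
  case (Cons x xs y ys)
  have "(\<Sum>b\<in>B. count_list (zip (x#xs) (y#ys)) (u,b)) =
        (\<Sum>b\<in>B. (if x = u \<and> y = b then 1 else 0) + count_list (zip xs ys) (u,b))"
    by (intro sum.cong) auto
  also have "\<dots> = (\<Sum>b\<in>B. (if x = u \<and> y = b then 1 else 0)) + count_list xs u"
    using Cons by (simp add: sum.distrib)
  also have "(\<Sum>b\<in>B. (if x = u \<and> y = b then 1 else (0::nat))) = (if x = u then 1 else 0)"
    using Cons.prems by (cases "x = u") (simp_all add: sum.delta sum.delta')
  finally show ?case by simp
qed

lemma sum_count_zip1:
  "length xs = length ys \<Longrightarrow> set xs \<subseteq> A \<Longrightarrow> finite A \<Longrightarrow>
    (\<Sum>u\<in>A. count_list (zip xs ys) (u,b)) = count_list ys b"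
proof (induction xs ys rule: list_induct2)
  case Nil then show ?case by simp
next
  case (Cons x xs y ys)
  have "(\<Sum>u\<in>A. count_list (zip (x#xs) (y#ys)) (u,b)) =
        (\<Sum>u\<in>A. (if x = u \<and> y = b then 1 else 0) + count_list (zip xs ys) (u,b))"
    by (intro sum.cong) auto
  also have "\<dots> = (\<Sum>u\<in>A. (if x = u \<and> y = b then 1 else 0)) + count_list ys b"
    using Cons by (simp add: sum.distrib)
  also have "(\<Sum>u\<in>A. (if x = u \<and> y = b then 1 else (0::nat))) = (if y = b then 1 else 0)"
    using Cons.prems by (cases "y = b") (simp_all add: sum.delta sum.delta')
  finally show ?case by simp
qed



lemma set_NO: "1 \<le> p \<Longrightarrow> p \<le> q \<Longrightarrow> q \<le> n \<Longrightarrow> u \<in> set (blocks f (outer_order n p q)) \<Longrightarrow> u \<le> n \<and> (u < p \<or> q < u)"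
  by (simp add: set_blocks mem_outer_order)

lemma set_NI: "u \<in> set (blocks f [p..<Suc q]) \<Longrightarrow> p \<le> u \<and> u \<le> q"
  by (simp add: set_blocks del: upt_Suc)

lemma actm_out_in: "\<not> (p \<le> u \<and> u \<le> q) \<Longrightarrow> p \<le> a \<Longrightarrow> a \<le> q \<Longrightarrow>
    actm n p q m u a = count_list (new_crossing n p q m) (u,a)"
  by (auto simp: actm_def)
lemma actm_in_out: "\<not> (p \<le> u \<and> u \<le> q) \<Longrightarrow> p \<le> a \<Longrightarrow> a \<le> q \<Longrightarrow>
    actm n p q m a u = count_list (new_crossing n p q m) (u,a)"
  by (auto simp: actm_def)
lemma actm_out_out: "\<not> (p \<le> u \<and> u \<le> q) \<Longrightarrow> \<not> (p \<le> w \<and> w \<le> q) \<Longrightarrow> actm n p q m u w = m u w"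
  by (auto simp: actm_def)
lemma actm_in_in: "p \<le> u \<Longrightarrow> u \<le> q \<Longrightarrow> p \<le> w \<Longrightarrow> w \<le> q \<Longrightarrow>
   actm n p q m u w = m (refl_pos p q u) (refl_pos p q w)"
  by (simp add: actm_def)

lemma actm_back:
  assumes pq: "1 \<le> p" "p \<le> q" "q \<le> n"
    and nc0: "NCrel n p q m0" and sym0: "\<And>i j. m0 i j = m0 j i" and bnd0: "\<And>u a. n < u \<Longrightarrow> m0 u a = 0"
    and ncq: "new_crossing n p q m' = zip (outer_list n p q m0) (inner_list n p q m0)"
    and oo: "\<And>i j. \<not>(p \<le> i \<and> i \<le> q) \<Longrightarrow> \<not>(p \<le> j \<and> j \<le> q) \<Longrightarrow> m' i j = m0 i j"
    and ii: "\<And>i j. p \<le> i \<Longrightarrow> i \<le> q \<Longrightarrow> p \<le> j \<Longrightarrow> j \<le> q \<Longrightarrow> m' (refl_pos p q i) (refl_pos p q j) = m0 i j"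
  shows "actm n p q m' = m0"
proof -
  have cnt: "count_list (zip (outer_list n p q m0) (inner_list n p q m0)) (u,a) = m0 u a"
    if u: "\<not>(p \<le> u \<and> u \<le> q)" and a: "p \<le> a" "a \<le> q" for u a
  proof (cases "u \<le> n")
    case True
    then have "u \<in> set (outer_order n p q)" using u pq by (auto simp: mem_outer_order)
    then show ?thesis using key_count[OF nc0 pq _ a] by simp
  next
    case False
    then have "u \<notin> set (outer_list n p q m0)" using set_NO[OF pq] by (auto simp: outer_list_eq)
    then have "(u,a) \<notin> set (zip (outer_list n p q m0) (inner_list n p q m0))"
      by (auto dest: set_zip_leftD)
    then show ?thesis using bnd0[of u a] False by simp
  qed
  show ?thesis
  proof (intro ext)
    fix i j
    show "actm n p q m' i j = m0 i j"
    proof (cases "p \<le> i \<and> i \<le> q")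
      case ti: True
      show ?thesis
      proof (cases "p \<le> j \<and> j \<le> q")
        case True
        then show ?thesis using ti ii[of i j]
          by (simp add: actm_in_in)
      next
        case False
        then show ?thesis using ti cnt[of j i] sym0[of i j] by (simp add: actm_in_out ncq)
      qed
    next
      case fi: False
      show ?thesis
      proof (cases "p \<le> j \<and> j \<le> q")
        case True
        then show ?thesis using fi cnt[of i j] by (simp add: actm_out_in ncq)
      next
        case False
        then show ?thesis using fi oo by (simp add: actm_out_out)
      qed
    qed
  qed
qed

lemma goodm_sym: "goodm n m \<Longrightarrow> m i j = m j i" by (simp add: goodm_def)
lemma goodm_diag: "goodm n m \<Longrightarrow> m i i = 0" by (simp add: goodm_def)
lemma goodm_bnd: "goodm n m \<Longrightarrow> n < u \<Longrightarrow> m u a = 0" by (simp add: goodm_def)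
lemma goodm_nc: "goodm n m \<Longrightarrow> a < c \<Longrightarrow> c < b \<Longrightarrow> b < d \<Longrightarrow> d \<le> n \<Longrightarrow> m a b = 0 \<or> m c d = 0"
  unfolding goodm_def by (elim conjE) (drule spec, drule spec, drule spec, drule spec, erule mp, simp)

lemma count_nc_outer:
  assumes pq: "1 \<le> p" "p \<le> q" "q \<le> n" and u: "u \<in> set (outer_order n p q)"
  shows "(\<Sum>a\<in>{p..q}. count_list (new_crossing n p q m) (u,a)) = Rout p q m u"
proof -
  have "(\<Sum>a\<in>{p..q}. count_list (new_crossing n p q m) (u,a)) =
        count_list (blocks (Rout p q m) (outer_order n p q)) u"
    unfolding new_crossing_eq[OF pq(2)]
    by (rule sum_count_zip2[OF length_lists2[OF pq]]) (auto dest!: set_NI simp del: upt_Suc)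
  also have "\<dots> = Rout p q m u" using u pq by (simp add: count_blocks distinct_outer_order)
  finally show ?thesis .
qed

lemma count_nc_inner:
  assumes pq: "1 \<le> p" "p \<le> q" "q \<le> n" and a: "p \<le> a" "a \<le> q"
  shows "(\<Sum>u\<in>{..n} - {p..q}. count_list (new_crossing n p q m) (u,a)) = Cin n p q m (refl_pos p q a)"
proof -
  have "(\<Sum>u\<in>{..n} - {p..q}. count_list (new_crossing n p q m) (u,a)) =
        count_list (blocks (\<lambda>a. Cin n p q m (refl_pos p q a)) [p..<Suc q]) a"
    unfolding new_crossing_eq[OF pq(2)]
    by (rule sum_count_zip1[OF length_lists2[OF pq]]) (auto dest: set_NO[OF pq])
  also have "\<dots> = Cin n p q m (refl_pos p q a)" using a by (simp add: count_blocks del: upt_Suc)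
  finally show ?thesis .
qed

lemma actm_invol:
  assumes pq: "1 \<le> p" "p \<le> q" "q \<le> n" and g: "goodm n m"
  shows "actm n p q (actm n p q m) = m"
proof (rule actm_back[OF pq goodm_NCrel[OF g pq]])
  let ?y = "actm n p q m"
  show "\<And>i j. m i j = m j i" using g by (simp add: goodm_sym)
  show "\<And>u a. n < u \<Longrightarrow> m u a = 0" using g by (simp add: goodm_bnd)
  show "\<And>i j. \<not>(p \<le> i \<and> i \<le> q) \<Longrightarrow> \<not>(p \<le> j \<and> j \<le> q) \<Longrightarrow> ?y i j = m i j"
    by (simp add: actm_out_out)
  show "\<And>i j. p \<le> i \<Longrightarrow> i \<le> q \<Longrightarrow> p \<le> j \<Longrightarrow> j \<le> q \<Longrightarrow> ?y (refl_pos p q i) (refl_pos p q j) = m i j"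
    using rp_in by (simp add: actm_in_in)
  have R: "Rout p q ?y u = Rout p q m u" if u: "u \<in> set (outer_order n p q)" for u
  proof -
    have uo: "\<not> (p \<le> u \<and> u \<le> q)" using u pq by (auto simp: mem_outer_order)
    have "Rout p q ?y u = (\<Sum>a\<in>{p..q}. count_list (new_crossing n p q m) (u,a))"
      unfolding Rout_def using uo by (intro sum.cong) (auto simp: actm_out_in)
    then show ?thesis using count_nc_outer[OF pq u] by simp
  qed
  have Ci: "Cin n p q ?y (refl_pos p q a) = Cin n p q m a" if a: "p \<le> a" "a \<le> q" for a
  proof -
    have ra: "p \<le> refl_pos p q a" "refl_pos p q a \<le> q" using rp_in[OF a] by auto
    have "Cin n p q ?y (refl_pos p q a) = (\<Sum>u\<in>{..n} - {p..q}. count_list (new_crossing n p q m) (u, refl_pos p q a))"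
      unfolding Cin_def using ra by (intro sum.cong) (auto simp: actm_out_in)
    then show ?thesis using count_nc_inner[OF pq ra] a by simp
  qed
  show "new_crossing n p q ?y = zip (outer_list n p q m) (inner_list n p q m)"
    unfolding new_crossing_eq[OF pq(2)] outer_list_eq inner_list_eq
  proof (intro arg_cong2[where f=zip])
    show "blocks (Rout p q ?y) (outer_order n p q) = blocks (Rout p q m) (outer_order n p q)"
      by (rule blocks_cong) (rule R)
    show "blocks (\<lambda>a. Cin n p q ?y (refl_pos p q a)) [p..<Suc q] = blocks (Cin n p q m) [p..<Suc q]"
      by (rule blocks_cong) (auto intro!: Ci simp del: upt_Suc)
  qed
qed



lemma actm_sym:
  assumes g: "goodm n m" shows "actm n p q m i j = actm n p q m j i"
proof (cases "p \<le> i \<and> i \<le> q")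
  case ti: True
  show ?thesis
  proof (cases "p \<le> j \<and> j \<le> q")
    case True then show ?thesis using ti goodm_sym[OF g] by (simp add: actm_in_in)
  next
    case False then show ?thesis using ti by (simp add: actm_in_out actm_out_in)
  qed
next
  case fi: False
  show ?thesis
  proof (cases "p \<le> j \<and> j \<le> q")
    case True then show ?thesis using fi by (simp add: actm_in_out actm_out_in)
  next
    case False then show ?thesis using fi goodm_sym[OF g] by (simp add: actm_out_out)
  qed
qed

lemma actm_diag: "goodm n m \<Longrightarrow> actm n p q m v v = 0"
  by (cases "p \<le> v \<and> v \<le> q") (simp_all add: actm_in_in actm_out_out goodm_diag)

lemma nc_left: "1 \<le> p \<Longrightarrow> p \<le> q \<Longrightarrow> q \<le> n \<Longrightarrow> (u,w) \<in> set (new_crossing n p q m) \<Longrightarrow>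
    u \<le> n \<and> (u < p \<or> q < u) \<and> Rout p q m u > 0"
  unfolding new_crossing_eq by (auto dest!: set_zip_leftD simp: set_blocks mem_outer_order)

lemma nc_right: "1 \<le> p \<Longrightarrow> p \<le> q \<Longrightarrow> q \<le> n \<Longrightarrow> (u,w) \<in> set (new_crossing n p q m) \<Longrightarrow>
    p \<le> w \<and> w \<le> q \<and> Cin n p q m (refl_pos p q w) > 0"
  unfolding new_crossing_eq by (auto dest!: set_zip_rightD simp: set_blocks simp del: upt_Suc)

lemma actm_bnd:
  assumes g: "goodm n m" and pq: "1 \<le> p" "p \<le> q" "q \<le> n" and u: "n < u"
  shows "actm n p q m u w = 0"
proof -
  have uo: "\<not> (p \<le> u \<and> u \<le> q)" using u pq by auto
  show ?thesis
  proof (cases "p \<le> w \<and> w \<le> q")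
    case True
    have "(u,w) \<notin> set (new_crossing n p q m)" using nc_left[OF pq] u by fastforce
    then show ?thesis using True uo by (simp add: actm_out_in)
  next
    case False then show ?thesis using uo g u by (simp add: actm_out_out goodm_bnd)
  qed
qed

lemma sum_split: "q \<le> n \<Longrightarrow> sum (f::nat \<Rightarrow> nat) {..n} = sum f {p..q} + sum f ({..n} - {p..q})"
  by (subst sum.subset_diff[of "{p..q}" "{..n}"]) auto

lemma deg_actm_out:
  assumes g: "goodm n m" and pq: "1 \<le> p" "p \<le> q" "q \<le> n" and v: "v \<le> n" "\<not> (p \<le> v \<and> v \<le> q)"
  shows "(\<Sum>w\<le>n. actm n p q m v w) = (\<Sum>w\<le>n. m v w)"
proof -
  have vO: "v \<in> set (outer_order n p q)" using v pq by (auto simp: mem_outer_order)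
  have "(\<Sum>w\<in>{p..q}. actm n p q m v w) = (\<Sum>w\<in>{p..q}. count_list (new_crossing n p q m) (v,w))"
    using v by (intro sum.cong) (auto simp: actm_out_in)
  also have "\<dots> = (\<Sum>w\<in>{p..q}. m v w)" using count_nc_outer[OF pq vO] by (simp add: Rout_def)
  finally have 1: "(\<Sum>w\<in>{p..q}. actm n p q m v w) = (\<Sum>w\<in>{p..q}. m v w)" .
  have 2: "(\<Sum>w\<in>{..n} - {p..q}. actm n p q m v w) = (\<Sum>w\<in>{..n} - {p..q}. m v w)"
    using v by (intro sum.cong) (auto simp: actm_out_out)
  show ?thesis using 1 2 sum_split[OF pq(3), of "actm n p q m v" p] sum_split[OF pq(3), of "m v" p] by simp
qed

lemma deg_actm_in:
  assumes g: "goodm n m" and pq: "1 \<le> p" "p \<le> q" "q \<le> n" and v: "p \<le> v" "v \<le> q"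
  shows "(\<Sum>w\<le>n. actm n p q m v w) = (\<Sum>w\<le>n. m (refl_pos p q v) w)"
proof -
  have "(\<Sum>w\<in>{p..q}. actm n p q m v w) = (\<Sum>w\<in>{p..q}. m (refl_pos p q v) (refl_pos p q w))"
    using v by (intro sum.cong) (auto simp: actm_in_in)
  also have "\<dots> = (\<Sum>w\<in>{p..q}. m (refl_pos p q v) w)"
    by (rule sum.reindex_bij_witness[where i="refl_pos p q" and j="refl_pos p q"])
       (auto simp: rp_in)
  finally have 1: "(\<Sum>w\<in>{p..q}. actm n p q m v w) = (\<Sum>w\<in>{p..q}. m (refl_pos p q v) w)" .
  have "(\<Sum>w\<in>{..n} - {p..q}. actm n p q m v w) = (\<Sum>w\<in>{..n} - {p..q}. count_list (new_crossing n p q m) (w,v))"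
    using v by (intro sum.cong) (auto simp: actm_in_out)
  also have "\<dots> = Cin n p q m (refl_pos p q v)" by (rule count_nc_inner[OF pq v])
  also have "\<dots> = (\<Sum>w\<in>{..n} - {p..q}. m (refl_pos p q v) w)"
    unfolding Cin_def using goodm_sym[OF g] by simp
  finally have 2: "(\<Sum>w\<in>{..n} - {p..q}. actm n p q m v w) = (\<Sum>w\<in>{..n} - {p..q}. m (refl_pos p q v) w)" .
  show ?thesis using 1 2 sum_split[OF pq(3), of "actm n p q m v" p] sum_split[OF pq(3), of "m (refl_pos p q v)" p] by simp
qed

lemma zip_sorted_nocross:
  assumes "sorted (map g xs)" "sorted ys" "(x1,y1) \<in> set (zip xs ys)" "(x2,y2) \<in> set (zip xs ys)"
    "(g x1 :: nat) < g x2" "(y2::nat) < y1"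
  shows False
proof -
  obtain i where i: "i < length xs" "i < length ys" "xs!i = x1" "ys!i = y1"
    using assms(3) by (auto simp: set_zip)
  obtain j where j: "j < length xs" "j < length ys" "xs!j = x2" "ys!j = y2"
    using assms(4) by (auto simp: set_zip)
  show False
  proof (cases "i \<le> j")
    case True
    then have "ys!i \<le> ys!j" using assms(2) j(2) by (auto simp: sorted_iff_nth_mono simp del: j(4))
    then show False using i j assms(6) by simp
  next
    case False
    then have "(map g xs)!j \<le> (map g xs)!i" using assms(1) i(1) unfolding sorted_iff_nth_mono by auto
    then show False using i j assms(5) by simp
  qed
qed



lemma swap_fix:
  assumes a: "1 \<le> a" "a + 1 \<le> n" and nc: "NCrel n a (a+1) m"
    and sym: "\<And>i j. m i j = m j i" and d1: "m a a = 0" and d2: "m (a+1) (a+1) = 0"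
    and bnd: "\<And>u c. n < u \<Longrightarrow> m u c = 0"
    and ceq: "Cin n a (a+1) m a = Cin n a (a+1) m (a+1)"
  shows "actm n a (a+1) m = m"
proof (rule actm_back[OF _ _ _ nc sym bnd])
  show "1 \<le> a" "a \<le> a + 1" "a + 1 \<le> n" using a by auto
  have bc: "blocks (\<lambda>c. Cin n a (a + 1) m (refl_pos a (a + 1) c)) [a..<Suc (a + 1)] = blocks (Cin n a (a + 1) m) [a..<Suc (a + 1)]"
  proof (rule blocks_cong)
    fix c assume "c \<in> set [a..<Suc (a + 1)]"
    then have "c = a \<or> c = a + 1" by auto
    then show "Cin n a (a + 1) m (refl_pos a (a + 1) c) = Cin n a (a + 1) m c"
      using ceq by (auto simp: refl_pos_def)
  qed
  show "new_crossing n a (a + 1) m = zip (outer_list n a (a + 1) m) (inner_list n a (a + 1) m)"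
    unfolding new_crossing_eq[OF le_add1] outer_list_eq inner_list_eq bc ..
  show "\<And>i j. \<not> (a \<le> i \<and> i \<le> a + 1) \<Longrightarrow> \<not> (a \<le> j \<and> j \<le> a + 1) \<Longrightarrow> m i j = m i j" by simp
  show "m (refl_pos a (a + 1) i) (refl_pos a (a + 1) j) = m i j"
    if "a \<le> i" "i \<le> a + 1" "a \<le> j" "j \<le> a + 1" for i j
  proof -
    have "i = a \<or> i = a + 1" "j = a \<or> j = a + 1" using that by auto
    then show ?thesis using d1 d2 sym[of a "a+1"] by (auto simp: refl_pos_def)
  qed
qed

lemma cnt_pos: "0 < count_list xs x \<Longrightarrow> x \<in> set xs"
  by (metis count_notin less_irrefl)

lemma sum_pos_ex: "0 < sum (f :: nat \<Rightarrow> nat) A \<Longrightarrow> \<exists>x\<in>A. 0 < f x"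
  by (rule ccontr) simp

lemma NCrel_after:
  assumes g: "goodm n m" and pq: "2 \<le> p" "p < q" "q \<le> n"
  shows "NCrel n (p - 1) p (actm n p q m)"
  unfolding NCrel_def
proof (intro allI impI)
  fix u u' c c'
  assume h: "before n (p - 1) p u u' \<and> p - 1 \<le> c \<and> c < c' \<and> c' \<le> p"
  have pq1: "1 \<le> p" "p \<le> q" "q \<le> n" using pq by auto
  let ?y = "actm n p q m"
  let ?nc = "new_crossing n p q m"
  have cc: "c = p - 1" "c' = p" using h pq by auto
  have sym: "m i j = m j i" for i j using goodm_sym[OF g] .
  have ncm: "a < c \<Longrightarrow> c < b \<Longrightarrow> b < d \<Longrightarrow> d \<le> n \<Longrightarrow> m a b = 0 \<or> m c d = 0" for a b c d
    using goodm_nc[OF g] .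
  have p1o: "\<not> (p \<le> p - 1 \<and> p - 1 \<le> q)" using pq by auto
  have F1: "\<exists>w. p \<le> w \<and> w \<le> q \<and> 0 < m u w" if "\<not> (p \<le> u \<and> u \<le> q)" "0 < ?y u p" for u
  proof -
    have "0 < count_list ?nc (u,p)" using that pq1 by (simp add: actm_out_in)
    then have "(u,p) \<in> set ?nc" by (rule cnt_pos)
    then have "Rout p q m u > 0" using nc_left[OF pq1] by blast
    then obtain w where "w \<in> {p..q}" "0 < m u w" using sum_pos_ex[of "m u" "{p..q}"] unfolding Rout_def by blast
    then show ?thesis by auto
  qed
  have F1': "(u,p) \<in> set ?nc" if "\<not> (p \<le> u \<and> u \<le> q)" "0 < ?y u p" for u
  proof -
    have "0 < count_list ?nc (u,p)" using that pq1 by (simp add: actm_out_in)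
    then show ?thesis by (rule cnt_pos)
  qed
  have F2': "(p - 1, u') \<in> set ?nc" if "p \<le> u'" "u' \<le> q" "0 < ?y u' (p - 1)" for u'
  proof -
    have "0 < count_list ?nc (p - 1, u')" using that p1o by (simp add: actm_in_out)
    then show ?thesis by (rule cnt_pos)
  qed
  have F2: "\<exists>w. w \<le> n \<and> (w < p \<or> q < w) \<and> 0 < m w (refl_pos p q u')"
    if "p \<le> u'" "u' \<le> q" "0 < ?y u' (p - 1)" for u'
  proof -
    have "Cin n p q m (refl_pos p q u') > 0" using nc_right[OF pq1 F2'[OF that]] by blast
    then obtain w where "w \<in> {..n} - {p..q}" "0 < m w (refl_pos p q u')"
      using sum_pos_ex[of "\<lambda>w. m w (refl_pos p q u')" "{..n} - {p..q}"] unfolding Cin_def by blast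
    then show ?thesis by auto
  qed
  have F3: "?y u' (p - 1) = m u' (p - 1)" if "\<not> (p \<le> u' \<and> u' \<le> q)" for u'
    using that p1o by (simp add: actm_out_out)
  have F4: "?y u p = m (refl_pos p q u) q" if "p \<le> u" "u \<le> q" for u
    using that pq by (simp add: actm_in_in refl_pos_def)
  have F5: False if "(u,p) \<in> set ?nc" "(p - 1, u') \<in> set ?nc" "p < u'" "u \<noteq> p - 1"
  proof -
    have s1: "sorted (map (gkey n p) (blocks (Rout p q m) (outer_order n p q)))"
      by (rule sorted_map_blocks[OF sorted_gkey_outer_order[OF pq1]])
    have s2: "sorted (blocks (\<lambda>a. Cin n p q m (refl_pos p q a)) [p..<Suc q])"
      using sorted_map_blocks[where g="\<lambda>x. x" and xs="[p..<Suc q]"] by (simp del: upt_Suc)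
    have uO: "u \<le> n \<and> (u < p \<or> q < u)" using nc_left[OF pq1 that(1)] by blast
    have "gkey n p (p - 1) < gkey n p u" using uO that(4) pq by (auto simp: gkey_def)
    then show False using zip_sorted_nocross[OF s1 s2, of "p - 1" u' u p] that
      unfolding new_crossing_eq[OF pq1(2)] by blast
  qed
  show "?y u c' = 0 \<or> ?y u' c = 0"
    unfolding cc
  proof (rule ccontr)
    assume "\<not> (?y u p = 0 \<or> ?y u' (p - 1) = 0)"
    then have yu: "0 < ?y u p" and yu': "0 < ?y u' (p - 1)" by auto
    consider (A) "u < p - 1" "u' < u" | (B) "u < p - 1" "p < u'" "u' \<le> n" | (C) "p < u'" "u' < u" "u \<le> n"
      using h unfolding before_def by argo
    then show False
    proof cases
      case A
      then have uo: "\<not> (p \<le> u \<and> u \<le> q)" "\<not> (p \<le> u' \<and> u' \<le> q)" by auto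
      obtain w where w: "p \<le> w" "w \<le> q" "0 < m u w" using F1[OF uo(1) yu] by blast
      have "m u' (p - 1) > 0" using yu' F3[OF uo(2)] by simp
      moreover have "m u' (p - 1) = 0 \<or> m u w = 0" using A w pq by (intro ncm) auto
      ultimately show False using w by auto
    next
      case B
      then have uo: "\<not> (p \<le> u \<and> u \<le> q)" by auto
      obtain w where w: "p \<le> w" "w \<le> q" "0 < m u w" using F1[OF uo(1) yu] by blast
      show False
      proof (cases "u' \<le> q")
        case True
        then show False using F5[OF F1'[OF uo yu] F2'[of u'] B(2)] B yu' True by auto
      next
        case False
        then have "m u' (p - 1) > 0" using yu' F3[of u'] by simp
        moreover have "m u w = 0 \<or> m (p - 1) u' = 0" using B w pq False by (intro ncm) auto
        ultimately show False using w sym[of "p - 1" u'] by auto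
      qed
    next
      case C
      show False
      proof (cases "u \<le> q")
        case True
        have u'i: "p \<le> u'" "u' \<le> q" using C True by auto
        have "0 < m (refl_pos p q u) q" using F4[of u] yu C True by simp
        moreover obtain w where w: "w \<le> n" "w < p \<or> q < w" "0 < m w (refl_pos p q u')"
          using F2[OF u'i yu'] by blast
        moreover have r: "p \<le> refl_pos p q u" "refl_pos p q u < refl_pos p q u'" "refl_pos p q u' < q"
          using C True pq by (auto simp: refl_pos_def)
        ultimately show False
        proof (cases "w < p")
          case True
          have "m w (refl_pos p q u') = 0 \<or> m (refl_pos p q u) q = 0"
            using True r pq by (intro ncm) auto
          then show False using \<open>0 < m (refl_pos p q u) q\<close> w by auto
        next
          case False
          then have "q < w" using w by auto
          then have "m (refl_pos p q u) q = 0 \<or> m (refl_pos p q u') w = 0"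
            using r w by (intro ncm) auto
          then show False using \<open>0 < m (refl_pos p q u) q\<close> w sym[of w "refl_pos p q u'"] by auto
        qed
      next
        case False
        then have uo: "\<not> (p \<le> u \<and> u \<le> q)" by auto
        show False
        proof (cases "u' \<le> q")
          case True
          have "u \<noteq> p - 1" using C by auto
          moreover have "(p - 1, u') \<in> set ?nc" using F2'[of u'] C yu' True by auto
          ultimately show False using F5[OF F1'[OF uo yu] _ C(1)] by blast
        next
          case False
          obtain w where w: "p \<le> w" "w \<le> q" "0 < m u w" using F1[OF uo yu] by blast
          have "m u' (p - 1) > 0" using yu' F3[of u'] False by simp
          moreover have "m (p - 1) u' = 0 \<or> m w u = 0" using C w pq False by (intro ncm) auto
          ultimately show False using w sym[of "p - 1" u'] sym[of w u] by auto
        qed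
      qed
    qed
  qed
qed



lemma cin_eq:
  assumes a: "a + 1 \<le> n" and sym: "\<And>i j. m i j = m j i" and d1: "m a a = 0" and d2: "m (a+1) (a+1) = 0"
    and deg: "(\<Sum>w\<le>n. m a w) = (\<Sum>w\<le>n. m (a+1) w)"
  shows "Cin n a (a+1) m a = Cin n a (a+1) m (a+1)"
proof -
  let ?R = "{..n} - {a..a+1}"
  have ab: "{a..a+1} = {a, a+1}" by auto
  have c1: "Cin n a (a+1) m a = (\<Sum>w\<in>?R. m a w)" unfolding Cin_def by (rule sum.cong) (rule refl, rule sym)
  have c2: "Cin n a (a+1) m (a+1) = (\<Sum>w\<in>?R. m (a+1) w)" unfolding Cin_def by (rule sum.cong) (rule refl, rule sym)
  have s1: "(\<Sum>w\<in>{a..a+1}. m a w) = m a (a+1)" unfolding ab using d1 by simp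
  have s2: "(\<Sum>w\<in>{a..a+1}. m (a+1) w) = m a (a+1)" unfolding ab using d2 sym[of "a+1" a] by simp
  have "(\<Sum>w\<le>n. m a w) = m a (a+1) + (\<Sum>w\<in>?R. m a w)"
    using sum_split[OF a, of "m a" a] s1 by simp
  moreover have "(\<Sum>w\<le>n. m (a+1) w) = m a (a+1) + (\<Sum>w\<in>?R. m (a+1) w)"
    using sum_split[OF a, of "m (a+1)" a] s2 by simp
  ultimately show ?thesis using deg c1 c2 by simp
qed

lemma step_orbit: "1 \<le> p \<Longrightarrow> p < q \<Longrightarrow> q \<le> n \<Longrightarrow> same_orbit n x (act n p q x)"
  unfolding same_orbit_def by (rule r_into_rtranclp) (auto simp: cactus_step_def)

lemma orbit_trans: "same_orbit n x y \<Longrightarrow> same_orbit n y z \<Longrightarrow> same_orbit n x z"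
  unfolding same_orbit_def by (rule rtranclp_trans)

lemma transp_pos:
  assumes x: "(lab, m) \<in> arc_diagrams n l linf" and ab: "1 \<le> a" "a < b" "b \<le> n"
    and deg: "(\<Sum>w\<le>n. m a w) = (\<Sum>w\<le>n. m b w)"
  shows "same_orbit n (lab, m) ((\<lambda>pos. if pos = a then lab b else if pos = b then lab a else lab pos), m)"
proof -
  have g: "goodm n m" using arc_goodm[OF x] .
  show ?thesis
  proof (cases "b = a + 1")
    case True
    have fx: "actm n a (a+1) m = m"
    proof (rule swap_fix)
      show "1 \<le> a" "a + 1 \<le> n" using ab True by auto
      show "NCrel n a (a + 1) m" using goodm_NCrel[OF g] ab True by auto
      show "\<And>i j. m i j = m j i" using goodm_sym[OF g] .
      show "m a a = 0" "m (a + 1) (a + 1) = 0" using goodm_diag[OF g] by auto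
      show "\<And>u c. n < u \<Longrightarrow> m u c = 0" using goodm_bnd[OF g] .
      show "Cin n a (a + 1) m a = Cin n a (a + 1) m (a + 1)"
        using cin_eq[of a n m] ab True deg goodm_sym[OF g] goodm_diag[OF g] by auto
    qed
    have "same_orbit n (lab, m) (act n a (a+1) (lab, m))" using step_orbit ab True by auto
    moreover have "act n a (a+1) (lab, m) = ((\<lambda>pos. if pos = a then lab b else if pos = b then lab a else lab pos), m)"
      unfolding act_split fx using True by (auto simp: refl_pos_def)
    ultimately show ?thesis by simp
  next
    case False
    then have ab2: "a + 1 < b" using ab by auto
    define y where "y = actm n (a+1) b m"
    have pq1: "1 \<le> a + 1" "a + 1 \<le> b" "b \<le> n" using ab2 ab by auto
    have gy_sym: "\<And>i j. y i j = y j i" unfolding y_def using actm_sym[OF g] .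
    have fx: "actm n a (a+1) y = y"
    proof (rule swap_fix)
      show "1 \<le> a" "a + 1 \<le> n" using ab ab2 by auto
      show "NCrel n a (a + 1) y" using NCrel_after[OF g, of "a+1" b] ab ab2 unfolding y_def by simp
      show "\<And>i j. y i j = y j i" by (rule gy_sym)
      show "y a a = 0" "y (a + 1) (a + 1) = 0" unfolding y_def using actm_diag[OF g] by auto
      show "\<And>u c. n < u \<Longrightarrow> y u c = 0" unfolding y_def using actm_bnd[OF g pq1] by blast
      have da: "(\<Sum>w\<le>n. y a w) = (\<Sum>w\<le>n. m a w)"
        unfolding y_def using deg_actm_out[OF g pq1, of a] ab by auto
      have db: "(\<Sum>w\<le>n. y (a+1) w) = (\<Sum>w\<le>n. m b w)"
        unfolding y_def using deg_actm_in[OF g pq1, of "a+1"] ab2 by (simp add: refl_pos_def)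
      show "Cin n a (a + 1) y a = Cin n a (a + 1) y (a + 1)"
        using cin_eq[of a n y] ab ab2 deg da db gy_sym \<open>y a a = 0\<close> \<open>y (a + 1) (a + 1) = 0\<close> by auto
    qed
    have inv: "actm n (a+1) b y = m" unfolding y_def by (rule actm_invol[OF pq1 g])
    let ?l1 = "\<lambda>pos. if a + 1 \<le> pos \<and> pos \<le> b then lab (refl_pos (a+1) b pos) else lab pos"
    let ?l2 = "\<lambda>pos. if a \<le> pos \<and> pos \<le> a + 1 then ?l1 (refl_pos a (a+1) pos) else ?l1 pos"
    let ?l3 = "\<lambda>pos. if a + 1 \<le> pos \<and> pos \<le> b then ?l2 (refl_pos (a+1) b pos) else ?l2 pos"
    have e1: "act n (a+1) b (lab, m) = (?l1, y)" unfolding act_split y_def ..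
    have e2: "act n a (a+1) (?l1, y) = (?l2, y)" unfolding act_split fx ..
    have e3: "act n (a+1) b (?l2, y) = (?l3, m)" unfolding act_split inv ..
    have l3: "?l3 = (\<lambda>pos. if pos = a then lab b else if pos = b then lab a else lab pos)"
    proof
      fix pos
      consider (pa) "pos = a" | (pb) "pos = b" | (mid) "a + 1 \<le> pos" "pos < b" | (out) "pos < a \<or> b < pos"
        using ab ab2 by linarith
      then show "?l3 pos = (if pos = a then lab b else if pos = b then lab a else lab pos)"
      proof cases
        case pa
        have r1: "refl_pos a (a+1) a = a + 1" "refl_pos (a+1) b (a+1) = b" by (simp_all add: refl_pos_def)
        have "?l3 pos = ?l2 a" using pa by simp
        also have "\<dots> = ?l1 (a+1)" using r1 by simp
        also have "\<dots> = lab b" using r1 ab2 by simp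
        finally show ?thesis using pa by simp
      next
        case pb
        have r1: "refl_pos (a+1) b b = a + 1" "refl_pos a (a+1) (a+1) = a" by (simp_all add: refl_pos_def)
        have "?l3 pos = ?l2 (a+1)" using pb ab2 r1 by simp
        also have "\<dots> = ?l1 a" using r1 by simp
        also have "\<dots> = lab a" by simp
        finally show ?thesis using pb ab ab2 by simp
      next
        case mid
        define r where "r = refl_pos (a+1) b pos"
        have r: "a + 1 < r" "r \<le> b" "refl_pos (a+1) b r = pos" using mid unfolding r_def refl_pos_def by auto
        have "?l3 pos = ?l2 r" using mid ab2 unfolding r_def by simp
        also have "\<dots> = ?l1 r" using r by simp
        also have "\<dots> = lab pos" using r by simp
        finally show ?thesis using mid by simp
      next
        case out
        then have o: "\<not> (a + 1 \<le> pos \<and> pos \<le> b)" "\<not> (a \<le> pos \<and> pos \<le> a + 1)" "pos \<noteq> a" "pos \<noteq> b"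
          using ab by auto
        have "?l3 pos = ?l2 pos" using o(1) by (simp only: if_False)
        also have "\<dots> = ?l1 pos" using o(2) by (simp only: if_False)
        also have "\<dots> = lab pos" using o(1) by (simp only: if_False)
        finally show ?thesis using o(3,4) by simp
      qed
    qed
    have "same_orbit n (lab, m) (act n (a+1) b (lab, m))" using pq1 ab2 by (intro step_orbit) auto
    then have o1: "same_orbit n (lab, m) (?l1, y)" unfolding e1 .
    have "same_orbit n (?l1, y) (act n a (a+1) (?l1, y))" using ab ab2 by (intro step_orbit) auto
    then have o2: "same_orbit n (?l1, y) (?l2, y)" unfolding e2 .
    have "same_orbit n (?l2, y) (act n (a+1) b (?l2, y))" using pq1 ab2 by (intro step_orbit) auto
    then have o3: "same_orbit n (?l2, y) (?l3, m)" unfolding e3 .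
    show ?thesis using orbit_trans[OF orbit_trans[OF o1 o2] o3] unfolding l3 .
  qed
qed



lemma relabel_pair: "relabel \<sigma> (lab, m) = ((\<lambda>pos. inv \<sigma> (lab pos)), m)"
  by (simp add: relabel_def)

lemma relabel_transp_valid:
  assumes x: "(lab, m) \<in> arc_diagrams n l linf" and i: "i \<in> {1..n}" and j: "j \<in> {1..n}" and lij: "l i = l j"
  shows "relabel (Transposition.transpose i j) (lab, m) \<in> arc_diagrams n l linf"
proof -
  have b: "bij_betw lab {1..n} {1..n}" and z: "\<forall>pos. pos \<notin> {1..n} \<longrightarrow> lab pos = 0"
    and dg: "\<forall>pos\<in>{1..n}. (\<Sum>b\<le>n. m pos b) = l (lab pos)"
    using x by (auto simp: arc_diagrams_def)
  have bt: "bij_betw (Transposition.transpose i j) {1..n} {1..n}" using i j by simp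
  have b': "bij_betw (\<lambda>pos. Transposition.transpose i j (lab pos)) {1..n} {1..n}"
    using bij_betw_trans[OF b bt] by (simp add: comp_def)
  have z': "\<forall>pos. pos \<notin> {1..n} \<longrightarrow> Transposition.transpose i j (lab pos) = 0"
    using z i j by auto
  have lt: "l (Transposition.transpose i j v) = l v" for v
    using lij by (cases "v = i"; cases "v = j") auto
  have x': "bij_betw lab {1..n} {1..n}
    \<and> (\<forall>pos. pos \<notin> {1..n} \<longrightarrow> lab pos = 0)
    \<and> (\<forall>a b. m a b = m b a)
    \<and> (\<forall>a. m a a = 0)
    \<and> (\<forall>a b. (a > n \<or> b > n) \<longrightarrow> m a b = 0)
    \<and> (\<forall>a b c d. a < c \<and> c < b \<and> b < d \<and> d \<le> n \<longrightarrow> m a b = 0 \<or> m c d = 0)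
    \<and> (\<forall>pos\<in>{1..n}. (\<Sum>b\<le>n. m pos b) = l (lab pos))
    \<and> (\<Sum>b\<le>n. m 0 b) = linf"
    using x unfolding arc_diagrams_def mem_Collect_eq prod.case .
  show ?thesis unfolding relabel_pair inv_transpose_eq arc_diagrams_def mem_Collect_eq prod.case lt
    using x' b' z' by (elim conjE) (intro conjI; assumption)
qed

lemma relabel_transp_orbit:
  assumes x: "(lab, m) \<in> arc_diagrams n l linf" and i: "i \<in> {1..n}" and j: "j \<in> {1..n}" and lij: "l i = l j"
  shows "same_orbit n (lab, m) (relabel (Transposition.transpose i j) (lab, m))"
proof (cases "i = j")
  case True
  then show ?thesis by (simp add: relabel_pair same_orbit_def)
next
  case False
  have b: "bij_betw lab {1..n} {1..n}" and z: "\<forall>pos. pos \<notin> {1..n} \<longrightarrow> lab pos = 0"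
    and dg: "\<forall>pos\<in>{1..n}. (\<Sum>b\<le>n. m pos b) = l (lab pos)"
    using x by (auto simp: arc_diagrams_def)
  have im: "lab ` {1..n} = {1..n}" using b by (rule bij_betw_imp_surj_on)
  have "i \<in> lab ` {1..n}" using i im by simp
  then obtain pi where pi: "pi \<in> {1..n}" "lab pi = i" by (auto elim!: imageE)
  have "j \<in> lab ` {1..n}" using j im by simp
  then obtain pj where pj: "pj \<in> {1..n}" "lab pj = j" by (auto elim!: imageE)
  have inj: "inj_on lab {1..n}" using b by (rule bij_betw_imp_inj_on)
  have ne: "pi \<noteq> pj" using False pi pj by auto
  have target: "relabel (Transposition.transpose i j) (lab, m) =
     ((\<lambda>pos. if pos = pi then lab pj else if pos = pj then lab pi else lab pos), m)"
  proof -
    have "Transposition.transpose i j (lab pos) = (if pos = pi then lab pj else if pos = pj then lab pi else lab pos)" for pos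
    proof (cases "pos \<in> {1..n}")
      case True
      show ?thesis
      proof (cases "pos = pi")
        case True then show ?thesis using pi pj by simp
      next
        case f1: False
        show ?thesis
        proof (cases "pos = pj")
          case True then show ?thesis using pi pj f1 by simp
        next
          case False
          have "lab pos \<noteq> lab pi" using inj_onD[OF inj _ \<open>pos \<in> {1..n}\<close> pi(1)] f1 by blast
          moreover have "lab pos \<noteq> lab pj" using inj_onD[OF inj _ \<open>pos \<in> {1..n}\<close> pj(1)] False by blast
          ultimately show ?thesis using False f1 pi(2) pj(2) by simp
        qed
      qed
    next
      case False
      then have "pos \<noteq> pi" "pos \<noteq> pj" "lab pos = 0" using pi pj z by auto
      then show ?thesis using i j by simp
    qed
    then show ?thesis by (simp add: relabel_pair)
  qed
  have deq: "(\<Sum>w\<le>n. m pi w) = (\<Sum>w\<le>n. m pj w)" using dg pi pj lij by simp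
  show ?thesis
  proof (cases "pi < pj")
    case True
    have "1 \<le> pi" "pj \<le> n" using pi pj by auto
    then show ?thesis unfolding target by (rule transp_pos[OF x _ True _ deq])
  next
    case False
    then have lt: "pj < pi" using ne by auto
    have e: "(\<lambda>pos. if pos = pi then lab pj else if pos = pj then lab pi else lab pos) =
             (\<lambda>pos. if pos = pj then lab pi else if pos = pi then lab pj else lab pos)"
    proof
      fix pos show "(if pos = pi then lab pj else if pos = pj then lab pi else lab pos) =
             (if pos = pj then lab pi else if pos = pi then lab pj else lab pos)"
        using ne by (cases "pos = pi") simp_all
    qed
    have "1 \<le> pj" "pi \<le> n" using pi pj by auto
    then show ?thesis unfolding target e by (rule transp_pos[OF x _ lt _ deq[symmetric]])
  qed
qed

theorem mainTheorem3:
  fixes n :: nat and l :: "nat \<Rightarrow> nat" and linf :: nat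
    and x :: diagram and S :: "nat set" and \<sigma> :: "nat \<Rightarrow> nat"
  assumes "x \<in> arc_diagrams n l linf"
    and "S \<subseteq> {1..n}"
    and "\<forall>i\<in>S. \<forall>j\<in>S. l i = l j"
    and "\<sigma> permutes S"
  shows "same_orbit n x (relabel \<sigma> x)"
proof -
  have fin: "finite S" using assms(2) finite_subset by blast
  have "\<forall>x\<in>arc_diagrams n l linf. same_orbit n x (relabel \<sigma> x)"
    using assms(4) fin
  proof (induction rule: permutes_induct)
    case id
    then show ?case by (auto simp: relabel_def same_orbit_def split: prod.splits)
  next
    case (swap a b p)
    show ?case
    proof
      fix y assume y: "y \<in> arc_diagrams n l linf"
      obtain lab m where ym: "y = (lab, m)" by (cases y)
      let ?t = "Transposition.transpose a b"
      have ab: "a \<in> {1..n}" "b \<in> {1..n}" using swap.hyps(1,2) assms(2) by auto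
      have lab': "l a = l b" using assms(3) swap.hyps(1,2) by blast
      have y': "relabel ?t y \<in> arc_diagrams n l linf"
        unfolding ym by (rule relabel_transp_valid[OF y[unfolded ym] ab lab'])
      have o1: "same_orbit n y (relabel ?t y)"
        unfolding ym by (rule relabel_transp_orbit[OF y[unfolded ym] ab lab'])
      have o2: "same_orbit n (relabel ?t y) (relabel p (relabel ?t y))"
        using swap.IH y' by blast
      have bp: "bij p" using swap.hyps(4) by (rule permutes_bij)
      have "relabel p (relabel ?t y) = relabel (?t \<circ> p) y"
        unfolding ym relabel_pair using o_inv_distrib[OF bij_transpose bp, of a b] by simp
      then show "same_orbit n y (relabel (?t \<circ> p) y)" using orbit_trans[OF o1 o2] by simp
    qed
  qed
  then show ?thesis using assms(1) by blast
qed


end
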